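(* Let $t\ge 2$, $r\ge 3$ and $k\ge 3$ be fixed integers. Then $\mathrm{ex}_r(n,F_{t,k}^r)=\Theta(n^r)$ if $k>r$, and $\mathrm{ex}_r(n,F_{t,k}^r)=\Theta(n^{r-1})$ if $3\le k\le r$ (as $n\to\infty$).
   Context: $F_{t,k}$ denotes the graph on $(k-1)t+1$ vertices consisting of $t$ copies of the complete graph $K_k$ pairwise sharing exactly one common vertex. For a graph $F$, its $r$-expansion $F^r$ is the $r$-graph obtained from $F$ by adding to each edge of $F$ a set of $r-2$ new vertices, where all $(r-2)|E(F)|$ new vertices are distinct from each other and from $V(F)$; each edge together with its new vertices becomes a hyperedge. $\mathrm{ex}_r(n,\mathcal F)$ denotes the maximum number of hyperedges in an $n$-vertex $r$-graph not containing $\mathcal F$ as a subhypergraph. *)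

theory Defs
  imports Main "HOL-Library.Landau_Symbols"
begin

text \<open>A (hyper)graph is given by its set of edges (each edge a finite vertex set).
  The vertex set of the pattern is the union of its edges (no isolated vertices).\<close>

definition contains_copy :: "'a set set \<Rightarrow> 'b set set \<Rightarrow> bool" where
  "contains_copy H F \<longleftrightarrow> (\<exists>f :: 'b \<Rightarrow> 'a. inj_on f (\<Union>F) \<and> (\<forall>e\<in>F. f ` e \<in> H))"

text \<open>The graph F_{t,k}: t copies of K_k pairwise sharing exactly the common vertex None;
  the i-th copy has vertex set {None} \<union> {Some (i,j) | j < k-1}.\<close>
definition clique_part :: "nat \<Rightarrow> nat \<Rightarrow> (nat \<times> nat) option set" where
  "clique_part k i = insert None {Some (i, j) | j. j < k - 1}"

definition Ftk :: "nat \<Rightarrow> nat \<Rightarrow> (nat \<times> nat) option set set" where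
  "Ftk t k = {e. \<exists>i<t. e \<subseteq> clique_part k i \<and> card e = 2}"

text \<open>The r-expansion of a graph G: each edge e is enlarged by r-2 new vertices
  Inr (e,0), ..., Inr (e,r-3), distinct for distinct edges and from V(G).\<close>
definition expansion :: "nat \<Rightarrow> 'a set set \<Rightarrow> ('a + ('a set \<times> nat)) set set" where
  "expansion r G = {Inl ` e \<union> (\<lambda>j. Inr (e, j)) ` {..<r - 2} | e. e \<in> G}"

definition ex_r :: "nat \<Rightarrow> nat \<Rightarrow> 'b set set \<Rightarrow> nat" where
  "ex_r r n F = Max {card H | H :: nat set set.
      H \<subseteq> {e. e \<subseteq> {..<n} \<and> card e = r} \<and> \<not> contains_copy H F}"

end

theory Submission
  imports Defs "HOL-Library.FuncSet"
begin

definition good :: "nat \<Rightarrow> nat set set \<Rightarrow> bool" where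
  "good m H \<longleftrightarrow> (\<forall>f\<in>H. \<forall>y\<in>f. m \<le> card {g\<in>H. f - {y} \<subseteq> g})"

lemma replace_vertex:
  assumes fin: "finite H" and unif: "\<forall>g\<in>H. finite g \<and> card g = r"
    and gd: "good m H" and f: "f \<in> H" and y: "y \<in> f"
    and W: "finite W" "card W < m"
  shows "\<exists>z. z \<notin> W \<and> z \<notin> f - {y} \<and> insert z (f - {y}) \<in> H"
proof (rule ccontr)
  assume nz: "\<not> ?thesis"
  let ?S = "f - {y}"
  let ?G = "{g\<in>H. ?S \<subseteq> g}"
  have m: "m \<le> card ?G" using gd f y unfolding good_def by blast
  have cf: "card f = r" "finite f" using unif f by auto
  have cS: "card ?S = r - 1" using cf y by simp
  have sing: "\<exists>z. z \<notin> ?S \<and> g = insert z ?S" if "g \<in> ?G" for g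
  proof -
    have g: "finite g" "card g = r" "?S \<subseteq> g" using that unif by auto
    have "r \<ge> 1" using cf y by (metis One_nat_def Suc_leI card_gt_0_iff empty_iff)
    have "card (g - ?S) = card g - card ?S" using g cf by (simp add: card_Diff_subset)
    then have "card (g - ?S) = 1" using g cS \<open>r \<ge> 1\<close> by simp
    then obtain z where "g - ?S = {z}" by (meson card_1_singletonE)
    then show ?thesis using g by blast
  qed
  have "?G \<subseteq> (\<lambda>z. insert z ?S) ` W"
  proof
    fix g assume "g \<in> ?G"
    then obtain z where z: "z \<notin> ?S" "g = insert z ?S" using sing by blast
    then have "z \<in> W" using nz \<open>g \<in> ?G\<close> by blast
    then show "g \<in> (\<lambda>z. insert z ?S) ` W" using z by blast
  qed
  then have "card ?G \<le> card W" using W(1) by (meson card_image_le card_mono finite_imageI order_trans)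
  then show False using m W by linarith
qed

lemma extend_edge:
  assumes fin: "finite H" and unif: "\<forall>g\<in>H. finite g \<and> card g = r"
    and gd: "good m H" and U: "finite U" "card U + r < m"
  shows "f \<in> H \<Longrightarrow> K \<subseteq> f \<Longrightarrow> \<exists>g\<in>H. K \<subseteq> g \<and> (g - K) \<inter> U = {}"
proof (induction "card ((f - K) \<inter> U)" arbitrary: f rule: less_induct)
  case less
  show ?case
  proof (cases "(f - K) \<inter> U = {}")
    case True then show ?thesis using less.prems by blast
  next
    case False
    then obtain y where y: "y \<in> f" "y \<notin> K" "y \<in> U" by blast
    have cf: "finite f" "card f = r" using unif less.prems by auto
    have "card (U \<union> f) \<le> card U + card f" by (rule card_Un_le)
    then have "card (U \<union> f) < m" using cf U by linarith
    then obtain z where z: "z \<notin> U \<union> f" "insert z (f - {y}) \<in> H"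
      using replace_vertex[OF fin unif gd less.prems(1) y(1), of "U \<union> f"] U cf by blast
    let ?f = "insert z (f - {y})"
    have K: "K \<subseteq> ?f" using less.prems y by blast
    have eq: "(?f - K) \<inter> U = ((f - K) \<inter> U) - {y}" using z y by blast
    have "card ((?f - K) \<inter> U) < card ((f - K) \<inter> U)" unfolding eq
      using y U(1) by (meson Diff_iff IntI card_Diff1_less finite_Int)
    from less.hyps[OF this z(2) K] show ?thesis .
  qed
qed

lemma cleaning:
  assumes "finite D"
  shows "finite H \<Longrightarrow> \<forall>g\<in>H. finite g \<and> card g = r \<Longrightarrow> \<forall>f\<in>H. \<forall>y\<in>f. f - {y} \<in> D
    \<Longrightarrow> card H > m * card D \<Longrightarrow> \<exists>H'\<subseteq>H. H' \<noteq> {} \<and> good m H'"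
  using assms
proof (induction "card D" arbitrary: H D rule: less_induct)
  case less
  show ?case
  proof (cases "good m H")
    case True
    then show ?thesis using less.prems(4) by (intro exI[of _ H]) auto
  next
    case False
    then obtain f y where fy: "f \<in> H" "y \<in> f" and lt: "card {g\<in>H. f - {y} \<subseteq> g} < m"
      unfolding good_def by (meson not_le)
    let ?S = "f - {y}"
    let ?H2 = "{g\<in>H. \<not> ?S \<subseteq> g}"
    let ?D2 = "D - {?S}"
    have SD: "?S \<in> D" using less.prems fy by blast
    have cD: "card ?D2 < card D" using SD less.prems(5) by (meson card_Diff1_less)
    have part: "card H = card ?H2 + card {g\<in>H. ?S \<subseteq> g}"
    proof -
      have "H = ?H2 \<union> {g\<in>H. ?S \<subseteq> g}" by blast
      moreover have "?H2 \<inter> {g\<in>H. ?S \<subseteq> g} = {}" by blast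
      ultimately show ?thesis using less.prems(1)
        by (metis (no_types, lifting) card_Un_disjoint finite_Un)
    qed
    have cD2: "card D = card ?D2 + 1" using SD less.prems(5)
      by (metis Suc_eq_plus1 card.remove)
    have h1: "card ?H2 > m * card ?D2" using part lt less.prems(4) cD2
      by (simp add: algebra_simps)
    have h2: "\<forall>f\<in>?H2. \<forall>y\<in>f. f - {y} \<in> ?D2" using less.prems(3) by blast
    have h3: "finite ?H2" using less.prems(1) by simp
    have h4: "\<forall>g\<in>?H2. finite g \<and> card g = r" using less.prems(2) by blast
    have h5: "finite ?D2" using less.prems(5) by simp
    have "\<exists>H'\<subseteq>?H2. H' \<noteq> {} \<and> good m H'"
      by (rule less.hyps[OF cD h3 h4 h2 h1 h5])
    then obtain H' where "H' \<subseteq> ?H2" "H' \<noteq> {}" "good m H'" by blast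
    then show ?thesis by blast
  qed
qed

lemma card_UN_bound:
  assumes "finite I" "\<forall>i\<in>I. finite (A i) \<and> card (A i) \<le> r"
  shows "card (\<Union>i\<in>I. A i) \<le> card I * r"
proof -
  have "card (\<Union>i\<in>I. A i) \<le> (\<Sum>i\<in>I. card (A i))" using assms(1) by (rule card_UN_le)
  also have "\<dots> \<le> (\<Sum>i\<in>I. r)" using assms(2) by (intro sum_mono) auto
  finally show ?thesis by simp
qed

lemma finite_Ftk: "finite (Ftk t k)" and Ftk_sub: "Ftk t k \<subseteq> Pow (\<Union>i<t. clique_part k i)"
proof -
  show sub: "Ftk t k \<subseteq> Pow (\<Union>i<t. clique_part k i)" unfolding Ftk_def by blast
  have "finite (clique_part k i)" for i unfolding clique_part_def by simp
  then show "finite (Ftk t k)" using sub by (meson finite_Pow_iff finite_UN_I finite_lessThan finite_subset)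
qed

lemma embed:
  assumes fin: "finite H" and unif: "\<forall>g\<in>H. finite g \<and> card g = r"
    and gd: "good m H" and ne: "H \<noteq> {}" and r3: "r \<ge> 3" and k3: "k \<ge> 3" and kr: "k \<le> r"
    and t1: "t \<ge> 1" and m: "(t + card (Ftk t k)) * r + r < m"
  shows "contains_copy H (expansion r (Ftk t k))"
proof -
  obtain f0 where f0: "f0 \<in> H" using ne by blast
  then have "card f0 = r" using unif by auto
  then obtain x where x: "x \<in> f0" using r3 by fastforce
  have step2: "\<exists>E. (\<forall>i<t'. E i \<in> H \<and> x \<in> E i) \<and>
     (\<forall>i<t'. \<forall>j<t'. i \<noteq> j \<longrightarrow> (E i - {x}) \<inter> (E j - {x}) = {})" if "t' \<le> t" for t'
    using that
  proof (induction t')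
    case 0 then show ?case by auto
  next
    case (Suc t')
    then obtain E where E: "\<forall>i<t'. E i \<in> H \<and> x \<in> E i"
      "\<forall>i<t'. \<forall>j<t'. i \<noteq> j \<longrightarrow> (E i - {x}) \<inter> (E j - {x}) = {}" by auto
    let ?U = "\<Union>i<t'. E i"
    have fU: "finite ?U" using E unif by auto
    have "card ?U \<le> card {..<t'} * r" using E unif by (intro card_UN_bound) auto
    then have "card ?U \<le> t' * r" by simp
    moreover have "t' * r \<le> (t + card (Ftk t k)) * r" using Suc.prems by (intro mult_le_mono1) simp
    ultimately have "card ?U + r < m" using m by linarith
    from extend_edge[OF fin unif gd fU this f0, of "{x}"] x
    obtain g where g: "g \<in> H" "{x} \<subseteq> g" "(g - {x}) \<inter> ?U = {}" by auto
    show ?case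
      apply (rule exI[of _ "E(t' := g)"])
      using E g by (auto simp: less_Suc_eq)
  qed
  then obtain E where E: "\<forall>i<t. E i \<in> H \<and> x \<in> E i"
      "\<forall>i<t. \<forall>j<t. i \<noteq> j \<longrightarrow> (E i - {x}) \<inter> (E j - {x}) = {}" by blast
  have aux: "\<exists>h. h ` {..<k-1} \<subseteq> E i - {x} \<and> inj_on h {..<k-1}" if "i < t" for i
  proof -
    have "finite (E i)" "card (E i) = r" "x \<in> E i" using E unif that by auto
    then have "card {..<k-1} \<le> card (E i - {x})" using kr by simp
    then show ?thesis
      using \<open>finite (E i)\<close> by (intro card_le_inj) auto
  qed
  have "\<forall>i. \<exists>h. i < t \<longrightarrow> h ` {..<k-1} \<subseteq> E i - {x} \<and> inj_on h {..<k-1}"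
    using aux by blast
  from choice[OF this] obtain a where a: "\<forall>i<t. a i ` {..<k-1} \<subseteq> E i - {x} \<and> inj_on (a i) {..<k-1}"
    by blast
  define c where "c = (\<lambda>v. case v of None \<Rightarrow> x | Some (i, j) \<Rightarrow> a i j)"
  define V where "V = (\<Union>i<t. clique_part k i)"
  define C where "C = (\<Union>i<t. E i)"
  have fC: "finite C" unfolding C_def using E unif by auto
  have cC: "card C \<le> t * r" unfolding C_def using E unif
    by (metis card_UN_bound card_lessThan finite_lessThan lessThan_iff order_refl)
  have cE: "c ` clique_part k i \<subseteq> E i" if "i < t" for i
    using that a E unfolding c_def clique_part_def by fastforce
  have cV: "c ` V \<subseteq> C" unfolding V_def C_def using cE by blast
  have memV: "u = None \<or> (\<exists>i j. u = Some (i, j) \<and> i < t \<and> j < k - 1)" if "u \<in> V" for u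
    using that unfolding V_def clique_part_def by blast
  have injc: "inj_on c V"
  proof (rule inj_onI)
    fix u v assume uv: "u \<in> V" "v \<in> V" "c u = c v"
    show "u = v"
    proof (cases u)
      case None
      show ?thesis
      proof (cases v)
        case (Some q)
        then obtain i' j' where q: "v = Some (i', j')" "i' < t" "j' < k - 1"
          using memV[OF uv(2)] by auto
        then show ?thesis using uv None a unfolding c_def by fastforce
      qed (use None in simp)
    next
      case (Some p)
      then obtain i j where p: "u = Some (i, j)" "i < t" "j < k - 1"
        using memV[OF uv(1)] by auto
      show ?thesis
      proof (cases v)
        case None
        then show ?thesis using uv a p unfolding c_def by fastforce
      next
        case (Some q)
        then obtain i' j' where q: "v = Some (i', j')" "i' < t" "j' < k - 1"
          using memV[OF uv(2)] by auto
        have "i = i'"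
        proof (rule ccontr)
          assume "i \<noteq> i'"
          then have "(E i - {x}) \<inter> (E i' - {x}) = {}" using E p q by blast
          moreover have "a i j \<in> E i - {x}" "a i' j' \<in> E i' - {x}" using a p q by auto
          ultimately show False using uv(3) p q unfolding c_def by auto
        qed
        then show ?thesis using uv(3) p q a unfolding c_def by (auto dest: inj_onD)
      qed
    qed
  qed
  have FV: "Ftk t k \<subseteq> Pow V" unfolding V_def by (rule Ftk_sub)
  have step4: "\<exists>G. (\<forall>e\<in>P. G e \<in> H \<and> c ` e \<subseteq> G e \<and> (G e - c ` e) \<inter> C = {}) \<and>
     (\<forall>e\<in>P. \<forall>e'\<in>P. e \<noteq> e' \<longrightarrow> (G e - c ` e) \<inter> (G e' - c ` e') = {})"
    if "P \<subseteq> Ftk t k" for P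
  proof -
    have "finite P" using that finite_Ftk finite_subset by blast
    then show ?thesis using that
    proof (induction P rule: finite_induct)
      case empty then show ?case by auto
    next
      case (insert e P)
      then obtain G where G: "\<forall>e\<in>P. G e \<in> H \<and> c ` e \<subseteq> G e \<and> (G e - c ` e) \<inter> C = {}"
        "\<forall>e\<in>P. \<forall>e'\<in>P. e \<noteq> e' \<longrightarrow> (G e - c ` e) \<inter> (G e' - c ` e') = {}" by auto
      let ?U = "C \<union> (\<Union>e'\<in>P. G e')"
      have fU: "finite ?U" using fC G unif insert.hyps(1) by auto
      have "card ?U \<le> card C + card (\<Union>e'\<in>P. G e')" by (rule card_Un_le)
      also have "card (\<Union>e'\<in>P. G e') \<le> card P * r" using G unif insert.hyps(1)
        by (intro card_UN_bound) auto
      also have "card P \<le> card (Ftk t k)" using insert.prems finite_Ftk by (meson card_mono insert_subset)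
      finally have "card ?U \<le> card C + card (Ftk t k) * r" by (simp add: mult_le_mono1)
      then have "card ?U \<le> (t + card (Ftk t k)) * r" using cC by (simp add: add_mult_distrib)
      then have "card ?U + r < m" using m by linarith
      from insert.prems obtain i where i: "i < t" "e \<subseteq> clique_part k i" unfolding Ftk_def by blast
      then have "c ` e \<subseteq> E i" using cE by blast
      moreover have "E i \<in> H" using E i by blast
      ultimately obtain g where g: "g \<in> H" "c ` e \<subseteq> g" "(g - c ` e) \<inter> ?U = {}"
        using extend_edge[OF fin unif gd fU \<open>card ?U + r < m\<close>, of "E i" "c ` e"] by auto
      show ?case
        apply (rule exI[of _ "G(e := g)"])
        using G g insert.hyps(2) by auto
    qed
  qed
  obtain G where G: "\<forall>e\<in>Ftk t k. G e \<in> H \<and> c ` e \<subseteq> G e \<and> (G e - c ` e) \<inter> C = {}"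
    "\<forall>e\<in>Ftk t k. \<forall>e'\<in>Ftk t k. e \<noteq> e' \<longrightarrow> (G e - c ` e) \<inter> (G e' - c ` e') = {}"
    using step4[OF order_refl] by blast
  have cardG: "card (G e - c ` e) = r - 2" if "e \<in> Ftk t k" for e
  proof -
    have "card e = 2" "e \<subseteq> V" using that FV unfolding Ftk_def by auto
    then have "card (c ` e) = 2" using injc by (metis card_image inj_on_subset)
    moreover have "finite (G e)" "card (G e) = r" using G unif that by auto
    moreover have "c ` e \<subseteq> G e" using G that by blast
    ultimately show ?thesis by (metis card_Diff_subset finite_subset)
  qed
  have auxb: "\<exists>h. bij_betw h {..<r-2} (G e - c ` e)" if e: "e \<in> Ftk t k" for e
  proof -
    have "finite (G e - c ` e)" using G unif e by auto
    from ex_bij_betw_nat_finite[OF this] show ?thesis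
      using cardG[OF e] by (simp add: atLeast0LessThan)
  qed
  have "\<forall>e. \<exists>h. e \<in> Ftk t k \<longrightarrow> bij_betw h {..<r-2} (G e - c ` e)"
    using auxb by blast
  from choice[OF this] obtain b where b: "\<forall>e\<in>Ftk t k. bij_betw (b e) {..<r-2} (G e - c ` e)" by blast
  define \<phi> where "\<phi> = case_sum c (\<lambda>(e, j). b e j)"
  have sup: "\<Union>(expansion r (Ftk t k)) \<subseteq> Inl ` V \<union> {Inr (e, j) | e j. e \<in> Ftk t k \<and> j < r - 2}"
    using FV unfolding expansion_def by blast
  have inj: "inj_on \<phi> (Inl ` V \<union> {Inr (e, j) | e j. e \<in> Ftk t k \<and> j < r - 2})"
  proof (rule inj_onI)
    fix u v assume u: "u \<in> Inl ` V \<union> {Inr (e, j) | e j. e \<in> Ftk t k \<and> j < r - 2}"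
      and v: "v \<in> Inl ` V \<union> {Inr (e, j) | e j. e \<in> Ftk t k \<and> j < r - 2}"
      and eq: "\<phi> u = \<phi> v"
    have inrC2: "b e j \<in> G e - c ` e" if "e \<in> Ftk t k" "j < r - 2" for e j
      using b that unfolding bij_betw_def by blast
    have inrC: "b e j \<notin> C" "b e j \<in> G e - c ` e" if "e \<in> Ftk t k" "j < r - 2" for e j
      using inrC2[OF that] G that by blast+
    show "u = v"
      using u v
    proof (elim UnE imageE CollectE exE conjE)
      fix p q assume "p \<in> V" "q \<in> V" "u = Inl p" "v = Inl q"
      then show ?thesis using eq injc unfolding \<phi>_def by (auto dest: inj_onD)
    next
      fix p e j assume "p \<in> V" "u = Inl p" "v = Inr (e, j)" "e \<in> Ftk t k" "j < r - 2"
      then show ?thesis using eq inrC cV unfolding \<phi>_def by auto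
    next
      fix p e j assume h: "p \<in> V" "v = Inl p" "u = Inr (e, j)" "e \<in> Ftk t k" "j < r - 2"
      have "c p \<in> C" using cV h by blast
      moreover have "b e j \<notin> C" using inrC h by blast
      moreover have "b e j = c p" using eq h unfolding \<phi>_def by simp
      ultimately show ?thesis by simp
    next
      fix e j e' j' assume h: "u = Inr (e, j)" "e \<in> Ftk t k" "j < r - 2"
        "v = Inr (e', j')" "e' \<in> Ftk t k" "j' < r - 2"
      show ?thesis
      proof (cases "e = e'")
        case True
        then show ?thesis using h eq b unfolding \<phi>_def bij_betw_def by (auto dest: inj_onD)
      next
        case False
        have "b e j \<in> G e - c ` e" "b e' j' \<in> G e' - c ` e'" using inrC h by auto
        moreover have "b e j = b e' j'" using eq h unfolding \<phi>_def by simp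
        moreover have "(G e - c ` e) \<inter> (G e' - c ` e') = {}" using G(2) h False by blast
        ultimately show ?thesis by auto
      qed
    qed
  qed
  show ?thesis unfolding contains_copy_def
  proof (intro exI conjI ballI)
    show "inj_on \<phi> (\<Union>(expansion r (Ftk t k)))" using inj sup by (rule inj_on_subset)
  next
    fix X assume "X \<in> expansion r (Ftk t k)"
    then obtain e where e: "e \<in> Ftk t k" "X = Inl ` e \<union> (\<lambda>j. Inr (e, j)) ` {..<r - 2}"
      unfolding expansion_def by blast
    have "\<phi> ` X = c ` e \<union> b e ` {..<r-2}" unfolding e \<phi>_def by (auto simp: image_Un image_image)
    also have "\<dots> = c ` e \<union> (G e - c ` e)" using b e unfolding bij_betw_def by auto
    also have "\<dots> = G e" using G e by auto
    finally show "\<phi> ` X \<in> H" using G e by auto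
  qed
qed

lemma contains_copy_mono: "contains_copy H F \<Longrightarrow> H \<subseteq> H' \<Longrightarrow> contains_copy H' F"
  unfolding contains_copy_def by blast

lemma ex_r_set_finite: "finite {card H | H :: nat set set.
      H \<subseteq> {e. e \<subseteq> {..<n} \<and> card e = r} \<and> \<not> contains_copy H F}"
proof -
  have "{card H | H :: nat set set. H \<subseteq> {e. e \<subseteq> {..<n} \<and> card e = r} \<and> \<not> contains_copy H F}
     \<subseteq> card ` Pow (Pow {..<n})" by blast
  then show ?thesis by (rule finite_subset) simp
qed

lemma ex_r_ge:
  assumes "H \<subseteq> {e. e \<subseteq> {..<n} \<and> card e = r}" "\<not> contains_copy H F"
  shows "card H \<le> ex_r r n F"
  unfolding ex_r_def using assms by (intro Max_ge[OF ex_r_set_finite]) blast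

lemma ex_r_le:
  assumes "\<And>H. H \<subseteq> {e. e \<subseteq> {..<n} \<and> card e = r} \<Longrightarrow> \<not> contains_copy H F \<Longrightarrow> card H \<le> B"
    and "F \<noteq> {}"
  shows "ex_r r n F \<le> B"
  unfolding ex_r_def
proof (rule Max.boundedI[OF ex_r_set_finite])
  have "\<not> contains_copy {} F" using assms(2) unfolding contains_copy_def by blast
  then show "{card H | H :: nat set set. H \<subseteq> {e. e \<subseteq> {..<n} \<and> card e = r} \<and> \<not> contains_copy H F} \<noteq> {}"
    by blast
qed (use assms(1) in blast)

lemma card_rsets: "card {e. e \<subseteq> {..<n::nat} \<and> card e = r} = n choose r"
  using n_subsets[of "{..<n}" r] by simp

lemma choose_le_pow: "n choose r \<le> n ^ r"
  by (cases "r \<le> n") (auto simp: binomial_le_pow binomial_eq_0)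

lemma card_H_le: "H \<subseteq> {e. e \<subseteq> {..<n::nat} \<and> card e = r} \<Longrightarrow> card H \<le> n ^ r"
proof -
  assume h: "H \<subseteq> {e. e \<subseteq> {..<n::nat} \<and> card e = r}"
  have fin: "finite {e. e \<subseteq> {..<n::nat} \<and> card e = r}" by simp
  have "card H \<le> card {e. e \<subseteq> {..<n::nat} \<and> card e = r}" by (rule card_mono[OF fin h])
  also have "\<dots> = n choose r" by (rule card_rsets)
  also have "\<dots> \<le> n ^ r" by (rule choose_le_pow)
  finally show ?thesis .
qed

lemma theta_poly:
  fixes f :: "nat \<Rightarrow> real"
  assumes "ca > 0" "cb > 0" "\<And>n. n \<ge> N \<Longrightarrow> ca * real n ^ p \<le> f n \<and> f n \<le> cb * real n ^ p"
  shows "f \<in> \<Theta>(\<lambda>n. real n ^ p)"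
proof (rule bigthetaI'[OF assms(1,2)])
  show "\<forall>\<^sub>F x in at_top. ca * norm (real x ^ p) \<le> norm (f x) \<and> norm (f x) \<le> cb * norm (real x ^ p)"
    unfolding eventually_at_top_linorder
  proof (intro exI allI impI)
    fix n assume "n \<ge> N"
    with assms(3)[OF this] assms(1) have "ca * real n ^ p \<le> f n \<and> f n \<le> cb * real n ^ p" by blast
    moreover have "0 \<le> ca * real n ^ p" using assms(1) by simp
    ultimately show "ca * norm (real n ^ p) \<le> norm (f n) \<and> norm (f n) \<le> cb * norm (real n ^ p)"
      by (simp add: abs_of_nonneg)
  qed
qed

lemma Ftk_ne: "t \<ge> 1 \<Longrightarrow> k \<ge> 3 \<Longrightarrow> Ftk t k \<noteq> {}"
proof -
  assume "t \<ge> 1" "k \<ge> 3"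
  then have "{None, Some (0, 0)} \<in> Ftk t k" unfolding Ftk_def clique_part_def by auto
  then show ?thesis by blast
qed

lemma expansion_ne: "F \<noteq> {} \<Longrightarrow> expansion r F \<noteq> {}"
  unfolding expansion_def by blast

lemma upper_small:
  assumes t1: "t \<ge> 1" and r3: "r \<ge> 3" and k3: "k \<ge> 3" and kr: "k \<le> r"
  shows "ex_r r n (expansion r (Ftk t k)) \<le> ((t + card (Ftk t k)) * r + r + 1) * n ^ (r - 1)"
proof -
  define M where "M = (t + card (Ftk t k)) * r + r + 1"
  define D where "D = {S. S \<subseteq> {..<n} \<and> card S = r - 1}"
  have fD: "finite D" unfolding D_def by simp
  have cD: "card D \<le> n ^ (r - 1)" unfolding D_def using card_rsets choose_le_pow by metis
  have "ex_r r n (expansion r (Ftk t k)) \<le> M * card D"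
  proof (rule ex_r_le)
    show "expansion r (Ftk t k) \<noteq> {}" using Ftk_ne[OF t1 k3] by (rule expansion_ne)
  next
    fix H assume H: "H \<subseteq> {e. e \<subseteq> {..<n} \<and> card e = r}" and nc: "\<not> contains_copy H (expansion r (Ftk t k))"
    show "card H \<le> M * card D"
    proof (rule ccontr)
      assume "\<not> card H \<le> M * card D"
      then have gt: "card H > M * card D" by simp
      have fH: "finite H" using H by (rule finite_subset) simp
      have unif: "\<forall>g\<in>H. finite g \<and> card g = r" using H by (auto intro: finite_subset)
      have sub: "\<forall>f\<in>H. \<forall>y\<in>f. f - {y} \<in> D"
      proof (intro ballI)
        fix f y assume "f \<in> H" "y \<in> f"
        then show "f - {y} \<in> D" using H unfolding D_def by (auto intro: finite_subset)
      qed
      obtain H' where H': "H' \<subseteq> H" "H' \<noteq> {}" "good M H'"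
        using cleaning[OF fD fH unif sub gt] by blast
      have "contains_copy H' (expansion r (Ftk t k))"
        using embed[of H' r M k t] H' fH unif r3 k3 kr t1 finite_subset unfolding M_def by auto
      then show False using nc contains_copy_mono H'(1) by blast
    qed
  qed
  also have "\<dots> \<le> M * n ^ (r - 1)" using cD by simp
  finally show ?thesis unfolding M_def .
qed

lemma lower_partite:
  assumes t1: "t \<ge> 1" and r1: "r \<ge> 1" and kr: "k > r"
  shows "(n div r) ^ r \<le> ex_r r n (expansion r (Ftk t k))"
proof -
  define q where "q = n div r"
  define emb where "emb = (\<lambda>g::nat \<Rightarrow> nat. (\<lambda>j. j * q + g j) ` {..<r})"
  define P where "P = PiE {..<r} (\<lambda>_. {..<q})"
  define H where "H = emb ` P"
  have divq: "(j * q + a) div q = j" if "a < q" for j a using that by simp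
  have injj: "inj_on (\<lambda>j. j * q + g j) {..<r}" if "g \<in> P" for g
  proof (rule inj_onI)
    fix i j assume "i \<in> {..<r}" "j \<in> {..<r}" "i * q + g i = j * q + g j"
    moreover have "g i < q" "g j < q" using that \<open>i \<in> {..<r}\<close> \<open>j \<in> {..<r}\<close> unfolding P_def by auto
    ultimately show "i = j" using divq by metis
  qed
  have qr: "q * r \<le> n" unfolding q_def by simp
  have Hsub: "H \<subseteq> {e. e \<subseteq> {..<n} \<and> card e = r}"
  proof
    fix e assume "e \<in> H"
    then obtain g where g: "g \<in> P" "e = emb g" unfolding H_def by blast
    have "j * q + g j < n" if "j < r" for j
    proof -
      have "g j < q" using g that unfolding P_def by auto
      then have "j * q + g j < (j + 1) * q" by simp
      also have "\<dots> \<le> r * q" using that by (intro mult_le_mono1) simp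
      finally show ?thesis using qr by (simp add: mult.commute)
    qed
    moreover have "card e = r" using g injj unfolding emb_def by (simp add: card_image)
    ultimately show "e \<in> {e. e \<subseteq> {..<n} \<and> card e = r}" using g unfolding emb_def by auto
  qed
  have "inj_on emb P"
  proof (rule inj_onI)
    fix g g' assume gg: "g \<in> P" "g' \<in> P" "emb g = emb g'"
    show "g = g'"
    proof (rule PiE_ext[OF gg(1)[unfolded P_def] gg(2)[unfolded P_def]])
      fix i assume i: "i \<in> {..<r}"
      then have "i * q + g i \<in> emb g'" using gg unfolding emb_def by blast
      then obtain j where j: "j < r" "i * q + g i = j * q + g' j" unfolding emb_def by blast
      have "g i < q" "g' j < q" using gg i j unfolding P_def by auto
      then have "i = j" using j divq by metis
      then show "g i = g' i" using j by simp
    qed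
  qed
  then have cH: "card H = q ^ r" unfolding H_def P_def by (simp add: card_image card_PiE)
  have nc: "\<not> contains_copy H (expansion r (Ftk t k))"
  proof
    assume "contains_copy H (expansion r (Ftk t k))"
    then obtain \<phi> where inj: "inj_on \<phi> (\<Union>(expansion r (Ftk t k)))"
      and ed: "\<forall>X\<in>expansion r (Ftk t k). \<phi> ` X \<in> H" unfolding contains_copy_def by blast
    define X where "X = (\<lambda>e::(nat \<times> nat) option set. Inl ` e \<union> (\<lambda>j. Inr (e, j)) ` {..<r - 2})"
    have XF: "X e \<in> expansion r (Ftk t k)" if "e \<in> Ftk t k" for e
      using that unfolding X_def expansion_def by blast
    have key: "\<exists>g\<in>P. \<forall>u\<in>e. \<exists>j<r. \<phi> (Inl u) = j * q + g j" if eF: "e \<in> Ftk t k" for e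
    proof -
      obtain g where g: "g \<in> P" "\<phi> ` X e = emb g" using ed XF[OF eF] unfolding H_def by blast
      have "\<forall>u\<in>e. \<exists>j<r. \<phi> (Inl u) = j * q + g j"
      proof
        fix u assume "u \<in> e"
        then have "\<phi> (Inl u) \<in> \<phi> ` X e" unfolding X_def by blast
        then show "\<exists>j<r. \<phi> (Inl u) = j * q + g j" using g unfolding emb_def by auto
      qed
      then show ?thesis using g by blast
    qed
    let ?C = "clique_part k 0"
    have cC: "card ?C = k"
    proof -
      have "?C = insert None (Some ` (\<lambda>j. (0, j)) ` {..<k - 1})" unfolding clique_part_def by auto
      moreover have "card (Some ` (\<lambda>j. (0::nat, j)) ` {..<k - 1}) = k - 1"
        by (simp add: card_image inj_on_def)
      ultimately show ?thesis using kr by simp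
    qed
    have fC: "finite ?C" unfolding clique_part_def by simp
    have pairF: "{u, v} \<in> Ftk t k" if "u \<in> ?C" "v \<in> ?C" "u \<noteq> v" for u v
      using that t1 unfolding Ftk_def by (intro CollectI exI[of _ 0]) auto
    have psi: "\<phi> (Inl u) div q < r" if uC: "u \<in> ?C" for u
    proof -
      have "card (?C - {u}) \<ge> 1" using cC kr r1 uC fC by simp
      then have "?C - {u} \<noteq> {}" by (metis card.empty not_one_le_zero)
      then obtain v where v: "v \<in> ?C" "v \<noteq> u" by blast
      then obtain g where g: "g \<in> P" "\<forall>w\<in>{u, v}. \<exists>j<r. \<phi> (Inl w) = j * q + g j"
        using key[OF pairF[OF uC v(1)]] v by metis
      then obtain j where "j < r" "\<phi> (Inl u) = j * q + g j" by blast
      moreover have "g j < q" using g \<open>j < r\<close> unfolding P_def by auto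
      ultimately show ?thesis using divq by simp
    qed
    have "\<not> inj_on (\<lambda>u. \<phi> (Inl u) div q) ?C"
    proof
      assume "inj_on (\<lambda>u. \<phi> (Inl u) div q) ?C"
      then have "card ((\<lambda>u. \<phi> (Inl u) div q) ` ?C) = k" using cC by (simp add: card_image)
      moreover have "(\<lambda>u. \<phi> (Inl u) div q) ` ?C \<subseteq> {..<r}" using psi by auto
      ultimately show False using kr by (metis card_lessThan card_mono finite_lessThan not_le)
    qed
    then obtain u v where uv: "u \<in> ?C" "v \<in> ?C" "u \<noteq> v" "\<phi> (Inl u) div q = \<phi> (Inl v) div q"
      unfolding inj_on_def by blast
    obtain g where g: "g \<in> P" "\<forall>w\<in>{u, v}. \<exists>j<r. \<phi> (Inl w) = j * q + g j"
      using key[OF pairF[OF uv(1-3)]] by blast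
    then obtain i j where ij: "i < r" "\<phi> (Inl u) = i * q + g i" "j < r" "\<phi> (Inl v) = j * q + g j"
      by blast
    have "g i < q" "g j < q" using g ij unfolding P_def by auto
    then have "i = j" using uv(4) ij divq by metis
    then have "\<phi> (Inl u) = \<phi> (Inl v)" using ij by simp
    moreover have "Inl u \<in> \<Union>(expansion r (Ftk t k))" "Inl v \<in> \<Union>(expansion r (Ftk t k))"
      using XF[OF pairF[OF uv(1-3)]] unfolding X_def by blast+
    ultimately have "u = v" using inj_onD[OF inj] by (metis sum.inject(1))
    then show False using uv(3) by simp
  qed
  have "card H \<le> ex_r r n (expansion r (Ftk t k))" by (rule ex_r_ge[OF Hsub nc])
  then show ?thesis using cH unfolding q_def by simp
qed

lemma lower_star:
  assumes t2: "t \<ge> 2" and k3: "k \<ge> 3" and r1: "r \<ge> 1" and n1: "n \<ge> 1"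
  shows "(n - 1) choose (r - 1) \<le> ex_r r n (expansion r (Ftk t k))"
proof -
  define T where "T = {S. S \<subseteq> {1..<n} \<and> card S = r - 1}"
  define H where "H = insert 0 ` T"
  have cT: "card T = (n - 1) choose (r - 1)" unfolding T_def using n_subsets[of "{1..<n}" "r - 1"] by simp
  have "inj_on (insert 0) T"
  proof (rule inj_onI)
    fix S S' assume "S \<in> T" "S' \<in> T" "insert 0 S = insert 0 S'"
    moreover have "0 \<notin> S" "0 \<notin> S'" using \<open>S \<in> T\<close> \<open>S' \<in> T\<close> unfolding T_def by auto
    ultimately show "S = S'" by (metis insert_ident)
  qed
  then have cH: "card H = (n - 1) choose (r - 1)" unfolding H_def using cT by (simp add: card_image)
  have Hsub: "H \<subseteq> {e. e \<subseteq> {..<n} \<and> card e = r}"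
  proof
    fix e assume "e \<in> H"
    then obtain S where S: "S \<subseteq> {1..<n}" "card S = r - 1" "e = insert 0 S" unfolding H_def T_def by blast
    have "finite S" "0 \<notin> S" using S(1) finite_subset by auto
    then have "card e = r" using S r1 by simp
    moreover have "e \<subseteq> {..<n}" using S n1 by auto
    ultimately show "e \<in> {e. e \<subseteq> {..<n} \<and> card e = r}" by blast
  qed
  have nc: "\<not> contains_copy H (expansion r (Ftk t k))"
  proof
    assume "contains_copy H (expansion r (Ftk t k))"
    then obtain \<phi> where inj: "inj_on \<phi> (\<Union>(expansion r (Ftk t k)))"
      and ed: "\<forall>X\<in>expansion r (Ftk t k). \<phi> ` X \<in> H" unfolding contains_copy_def by blast
    define X where "X = (\<lambda>e::(nat \<times> nat) option set. Inl ` e \<union> (\<lambda>j. Inr (e, j)) ` {..<r - 2})"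
    have XF: "X e \<in> expansion r (Ftk t k)" if "e \<in> Ftk t k" for e
      using that unfolding X_def expansion_def by blast
    define e1 where "e1 = {Some (0::nat, 0::nat), Some (0, 1)}"
    define e2 where "e2 = {Some (1::nat, 0::nat), Some (1, 1)}"
    have e1: "e1 \<in> Ftk t k" using t2 k3 unfolding e1_def Ftk_def clique_part_def
      by (intro CollectI exI[of _ 0]) auto
    have e2: "e2 \<in> Ftk t k" using t2 k3 unfolding e2_def Ftk_def clique_part_def
      by (intro CollectI exI[of _ 1]) auto
    have z: "0 \<in> \<phi> ` X e" if "e \<in> Ftk t k" for e
      using ed XF[OF that] unfolding H_def by auto
    obtain a where a: "a \<in> X e1" "\<phi> a = 0" using z[OF e1] by auto
    obtain b where b: "b \<in> X e2" "\<phi> b = 0" using z[OF e2] by auto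
    have aU: "a \<in> \<Union>(expansion r (Ftk t k))" using a(1) XF[OF e1] by blast
    have bU: "b \<in> \<Union>(expansion r (Ftk t k))" using b(1) XF[OF e2] by blast
    have "\<phi> a = \<phi> b" using a b by simp
    then have "a = b" by (rule inj_onD[OF inj _ aU bU])
    have d1: "e1 \<inter> e2 = {}" unfolding e1_def e2_def by auto
    have "Some (0, 0) \<in> e1" "Some (0, 0) \<notin> e2" unfolding e1_def e2_def by auto
    then have d2: "e1 \<noteq> e2" by blast
    have "X e1 \<inter> X e2 = {}" unfolding X_def using d1 d2 by blast
    then show False using a b \<open>a = b\<close> by blast
  qed
  have "card H \<le> ex_r r n (expansion r (Ftk t k))" by (rule ex_r_ge[OF Hsub nc])
  then show ?thesis using cH by simp
qed

lemma real_div_bound: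
  assumes "n \<ge> r" "r \<ge> 1"
  shows "real n / (2 * real r) \<le> real (n div r)"
proof -
  have m1: "n mod r < r" using assms by simp
  have m2: "n div r * r + n mod r = n" by (rule div_mult_mod_eq)
  have l1: "n < n div r * r + r" using m1 m2 by linarith
  have "n div r \<ge> 1" using assms by (metis div_le_mono div_self not_one_le_zero le_zero_eq)
  then have "r \<le> n div r * r" by simp
  then have "n div r * r + r \<le> 2 * (n div r) * r" by simp
  then have "n \<le> 2 * (n div r) * r" using l1 by linarith
  then have "real n \<le> 2 * real (n div r) * real r" by (metis of_nat_le_iff of_nat_mult of_nat_numeral)
  then show ?thesis using assms by (simp add: field_simps)
qed

theorem proposition2:
  fixes t r k :: nat
  assumes "t \<ge> 2" and "r \<ge> 3" and "k \<ge> 3"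
  shows "(k > r \<longrightarrow>
            (\<lambda>n. real (ex_r r n (expansion r (Ftk t k)))) \<in> \<Theta>(\<lambda>n. real n ^ r))
       \<and> (k \<le> r \<longrightarrow>
            (\<lambda>n. real (ex_r r n (expansion r (Ftk t k)))) \<in> \<Theta>(\<lambda>n. real n ^ (r - 1)))"
proof (intro conjI impI)
  have t1: "t \<ge> 1" using assms by simp
  have Fne: "expansion r (Ftk t k) \<noteq> {}" using Ftk_ne[OF t1 assms(3)] by (rule expansion_ne)
  {
    assume kr: "k > r"
    show "(\<lambda>n. real (ex_r r n (expansion r (Ftk t k)))) \<in> \<Theta>(\<lambda>n. real n ^ r)"
    proof (rule theta_poly[where ca = "(1 / (2 * real r)) ^ r" and cb = 1 and N = r])
      show "(1 / (2 * real r)) ^ r > 0" using assms by simp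
      show "(1::real) > 0" by simp
      fix n assume n: "n \<ge> r"
      have up: "ex_r r n (expansion r (Ftk t k)) \<le> n ^ r"
        by (rule ex_r_le[OF card_H_le Fne])
      have lo: "(n div r) ^ r \<le> ex_r r n (expansion r (Ftk t k))"
        using lower_partite[OF t1 _ kr] assms by simp
      have "(1 / (2 * real r)) ^ r * real n ^ r = (real n / (2 * real r)) ^ r"
        by (simp add: power_mult_distrib[symmetric])
      also have "\<dots> \<le> real (n div r) ^ r"
        using real_div_bound[OF n] assms by (intro power_mono) auto
      also have "\<dots> \<le> real (ex_r r n (expansion r (Ftk t k)))"
        using lo by (metis of_nat_le_iff of_nat_power)
      finally show "(1 / (2 * real r)) ^ r * real n ^ r \<le> real (ex_r r n (expansion r (Ftk t k))) \<and>
          real (ex_r r n (expansion r (Ftk t k))) \<le> 1 * real n ^ r"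
        using up by (metis mult_1 of_nat_le_iff of_nat_power)
    qed
  }
  {
    assume kr: "k \<le> r"
    define M where "M = (t + card (Ftk t k)) * r + r + 1"
    show "(\<lambda>n. real (ex_r r n (expansion r (Ftk t k)))) \<in> \<Theta>(\<lambda>n. real n ^ (r - 1))"
    proof (rule theta_poly[where ca = "(1 / (2 * real (r - 1))) ^ (r - 1)" and cb = "real M" and N = r])
      show "(1 / (2 * real (r - 1))) ^ (r - 1) > 0" using assms by simp
      have "M > 0" unfolding M_def by simp
      then show "real M > 0" by simp
      fix n assume n: "n \<ge> r"
      have up: "ex_r r n (expansion r (Ftk t k)) \<le> M * n ^ (r - 1)"
        unfolding M_def by (rule upper_small[OF t1 assms(2,3) kr])
      have lo: "(n - 1) choose (r - 1) \<le> ex_r r n (expansion r (Ftk t k))"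
        using lower_star[OF assms(1,3)] assms n by simp
      have r1: "real (r - 1) > 0" using assms by simp
      have "real n \<le> 2 * real (n - 1)" using n assms by simp
      then have "real n / 2 \<le> real (n - 1)" by simp
      then have "real n / 2 / real (r - 1) \<le> real (n - 1) / real (r - 1)"
        using r1 by (intro divide_right_mono) auto
      then have b: "real n / (2 * real (r - 1)) \<le> real (n - 1) / real (r - 1)"
        by (simp add: divide_divide_eq_left)
      have "(1 / (2 * real (r - 1))) ^ (r - 1) * real n ^ (r - 1) = (real n / (2 * real (r - 1))) ^ (r - 1)"
        by (simp add: power_mult_distrib[symmetric])
      also have "\<dots> \<le> (real (n - 1) / real (r - 1)) ^ (r - 1)"
        using b r1 by (intro power_mono) auto
      also have "\<dots> \<le> real ((n - 1) choose (r - 1))"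
        using n by (intro binomial_ge_n_over_k_pow_k) simp
      also have "\<dots> \<le> real (ex_r r n (expansion r (Ftk t k)))"
        using lo by simp
      finally show "(1 / (2 * real (r - 1))) ^ (r - 1) * real n ^ (r - 1) \<le> real (ex_r r n (expansion r (Ftk t k))) \<and>
          real (ex_r r n (expansion r (Ftk t k))) \<le> real M * real n ^ (r - 1)"
        using up by (metis of_nat_le_iff of_nat_mult of_nat_power)
    qed
  }
qed

end
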